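(* Let $A$ be a ring of Krull dimension $d$ and let $s\in A$ be a non-zero divisor such that $\dim(A_s)\le d-1$. Then there exists a generalized dimension function $\delta:\operatorname{Spec}(A)\to\mathbb N$ such that $\delta(\mathfrak p)\le d-1$ for all $\mathfrak p\in\operatorname{Spec}(A)$ and $\delta(\mathfrak p)=\dim(A/\mathfrak p)$ for every prime $\mathfrak p$ containing $s$.
   Context: Rings are commutative Noetherian with $1\ne0$ of finite Krull dimension. For $\mathcal S\subset\operatorname{Spec}(A)$ and a function $\delta:\mathcal S\to\mathbb N$, define a partial order on $\mathcal S$ by $\mathfrak p\ll\mathfrak q$ iff $\mathfrak p\subset\mathfrak q$ and $\delta(\mathfrak p)>\delta(\mathfrak q)$. $\delta$ is called a generalized dimension function if for every ideal $I\subset A$ the set $V(I)\cap\mathcal S$ has only finitely many minimal elements with respect to $\ll$. *)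

theory Defs
  imports Main "HOL-Library.Extended_Nat"
begin

(* Ideals of a commutative ring with 1 (type-class idiom: the ring is the type 'a) *)
definition is_ideal :: "'a::comm_ring_1 set \<Rightarrow> bool" where
  "is_ideal I \<longleftrightarrow> 0 \<in> I \<and> (\<forall>x\<in>I. \<forall>y\<in>I. x + y \<in> I) \<and> (\<forall>x\<in>I. - x \<in> I)
     \<and> (\<forall>r. \<forall>x\<in>I. r * x \<in> I)"

definition is_prime_ideal :: "'a::comm_ring_1 set \<Rightarrow> bool" where
  "is_prime_ideal P \<longleftrightarrow> is_ideal P \<and> P \<noteq> UNIV \<and> (\<forall>a b. a * b \<in> P \<longrightarrow> a \<in> P \<or> b \<in> P)"

definition Spec :: "'a::comm_ring_1 set set" where
  "Spec = {P. is_prime_ideal P}"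

definition V :: "'a::comm_ring_1 set \<Rightarrow> 'a set set" where
  "V I = {P \<in> Spec. I \<subseteq> P}"

definition noetherian_ring :: "'a::comm_ring_1 itself \<Rightarrow> bool" where
  "noetherian_ring _ \<longleftrightarrow>
     (\<forall>f :: nat \<Rightarrow> 'a set. (\<forall>n. is_ideal (f n)) \<and> (\<forall>n. f n \<subseteq> f (Suc n))
        \<longrightarrow> (\<exists>N. \<forall>n\<ge>N. f n = f N))"

definition has_chain :: "'a set set \<Rightarrow> nat \<Rightarrow> bool" where
  "has_chain S n \<longleftrightarrow> (\<exists>c :: nat \<Rightarrow> 'a set. (\<forall>i\<le>n. c i \<in> S) \<and> (\<forall>i<n. c i \<subset> c (Suc i)))"

(* dimension (supremum of lengths of chains) of a set of primes; 0 if the set is empty *)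
definition chain_dim :: "'a set set \<Rightarrow> enat" where
  "chain_dim S = Sup {enat n | n. has_chain S n}"

definition krull_dim :: "'a::comm_ring_1 itself \<Rightarrow> enat" where
  "krull_dim _ = chain_dim (Spec :: 'a set set)"

(* dim(A_s): Spec(A_s) is identified with the primes of A not containing s *)
definition dim_localization :: "'a::comm_ring_1 \<Rightarrow> enat" where
  "dim_localization s = chain_dim {P \<in> Spec. s \<notin> P}"

(* dim(A/p): Spec(A/p) is identified with the primes of A containing p *)
definition dim_quotient :: "'a::comm_ring_1 set \<Rightarrow> enat" where
  "dim_quotient p = chain_dim {P \<in> Spec. p \<subseteq> P}"

definition dll :: "('a set \<Rightarrow> nat) \<Rightarrow> 'a set \<Rightarrow> 'a set \<Rightarrow> bool" where
  "dll \<delta> p q \<longleftrightarrow> p \<subseteq> q \<and> \<delta> p > \<delta> q"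

definition dll_minimal :: "('a set \<Rightarrow> nat) \<Rightarrow> 'a set set \<Rightarrow> 'a set set" where
  "dll_minimal \<delta> T = {p \<in> T. \<not> (\<exists>q\<in>T. dll \<delta> q p)}"

definition gen_dim_fun :: "'a::comm_ring_1 set set \<Rightarrow> ('a set \<Rightarrow> nat) \<Rightarrow> bool" where
  "gen_dim_fun S \<delta> \<longleftrightarrow> S \<subseteq> Spec \<and> (\<forall>I. is_ideal I \<longrightarrow> finite (dll_minimal \<delta> (V I \<inter> S)))"

end

theory Submission
  imports Defs
begin

definition addgen :: "'a::comm_ring_1 set \<Rightarrow> 'a \<Rightarrow> 'a set" where
  "addgen I a = {x + r * a | x r. x \<in> I}"

lemma ideal_0: "is_ideal I \<Longrightarrow> 0 \<in> I" unfolding is_ideal_def by blast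
lemma ideal_add: "is_ideal I \<Longrightarrow> x \<in> I \<Longrightarrow> y \<in> I \<Longrightarrow> x + y \<in> I" unfolding is_ideal_def by blast
lemma ideal_neg: "is_ideal I \<Longrightarrow> x \<in> I \<Longrightarrow> - x \<in> I" unfolding is_ideal_def by blast
lemma ideal_mult: "is_ideal I \<Longrightarrow> x \<in> I \<Longrightarrow> r * x \<in> I" unfolding is_ideal_def by blast

lemma addgen_iff: "z \<in> addgen I a \<longleftrightarrow> (\<exists>x r. x \<in> I \<and> z = x + r * a)"
  unfolding addgen_def by blast

lemma ideal_addgen:
  assumes I: "is_ideal I" shows "is_ideal (addgen I a)"
  unfolding is_ideal_def
proof (intro conjI ballI allI)
  show "0 \<in> addgen I a" unfolding addgen_iff
    by (rule exI[of _ 0], rule exI[of _ 0]) (simp add: ideal_0[OF I])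
next
  fix x y assume "x \<in> addgen I a" "y \<in> addgen I a"
  then obtain x1 r1 x2 r2 where h: "x1 \<in> I" "x = x1 + r1 * a" "x2 \<in> I" "y = x2 + r2 * a"
    unfolding addgen_iff by blast
  show "x + y \<in> addgen I a" unfolding addgen_iff
    by (rule exI[of _ "x1 + x2"], rule exI[of _ "r1 + r2"])
       (simp add: h ideal_add[OF I] distrib_right distrib_left ac_simps)
next
  fix x assume "x \<in> addgen I a"
  then obtain x1 r1 where h: "x1 \<in> I" "x = x1 + r1 * a" unfolding addgen_iff by blast
  show "- x \<in> addgen I a" unfolding addgen_iff
    by (rule exI[of _ "- x1"], rule exI[of _ "- r1"]) (simp add: h ideal_neg[OF I])
next
  fix r x assume "x \<in> addgen I a"
  then obtain x1 r1 where h: "x1 \<in> I" "x = x1 + r1 * a" unfolding addgen_iff by blast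
  show "r * x \<in> addgen I a" unfolding addgen_iff
    by (rule exI[of _ "r * x1"], rule exI[of _ "r * r1"]) (simp add: h ideal_mult[OF I] distrib_left ac_simps)
qed

lemma addgen_sub: "is_ideal I \<Longrightarrow> I \<subseteq> addgen I a"
proof
  fix x assume "x \<in> I"
  then show "x \<in> addgen I a" unfolding addgen_iff
    by (intro exI[of _ x] exI[of _ 0]) auto
qed

lemma addgen_mem: "is_ideal I \<Longrightarrow> a \<in> addgen I a"
  unfolding addgen_iff by (intro exI[of _ 0] exI[of _ 1]) (simp add: ideal_0)

lemma addgen_le: "is_ideal P \<Longrightarrow> I \<subseteq> P \<Longrightarrow> a \<in> P \<Longrightarrow> addgen I a \<subseteq> P"
  unfolding addgen_iff subset_iff by (metis ideal_add ideal_mult)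

definition ideal_rel :: "('a::comm_ring_1 set \<times> 'a set) set" where
  "ideal_rel = {(J, I). is_ideal I \<and> is_ideal J \<and> I \<subset> J}"

lemma wf_ideal_rel:
  assumes "noetherian_ring TYPE('a::comm_ring_1)"
  shows "wf (ideal_rel :: ('a set \<times> 'a set) set)"
proof -
  { fix f :: "nat \<Rightarrow> 'a set" assume f: "\<forall>i. (f (Suc i), f i) \<in> ideal_rel"
    then have f1: "\<forall>n. is_ideal (f n)" and f2: "\<forall>n. f n \<subseteq> f (Suc n)" unfolding ideal_rel_def by auto
    have "\<exists>N. \<forall>n\<ge>N. f n = f N"
      by (rule assms[unfolded noetherian_ring_def, rule_format, of f, OF conjI, OF f1 f2])
    then obtain N where N: "\<forall>n\<ge>N. f n = f N" by blast
    have "f (Suc N) = f N" using N by (elim allE[of _ "Suc N"]) simp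
    moreover have "f N \<subset> f (Suc N)" using f unfolding ideal_rel_def by auto
    ultimately have False by auto }
  then show ?thesis unfolding wf_iff_no_infinite_down_chain by blast
qed

definition MinP :: "'a::comm_ring_1 set \<Rightarrow> 'a set set" where
  "MinP I = {P \<in> V I. \<forall>Q\<in>V I. Q \<subseteq> P \<longrightarrow> Q = P}"

lemma prime_not_univ_one: "is_prime_ideal P \<Longrightarrow> (1::'a::comm_ring_1) \<notin> P"
proof
  assume P: "is_prime_ideal P" and one: "1 \<in> P"
  have "\<forall>r. \<forall>x\<in>P. r * x \<in> P" using P unfolding is_prime_ideal_def is_ideal_def by blast
  then have "\<And>r. r * 1 \<in> P" using one by blast
  then have "P = UNIV" by auto
  then show False using P unfolding is_prime_ideal_def by blast
qed

lemma finite_MinP: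
  assumes noeth: "noetherian_ring TYPE('a::comm_ring_1)"
  shows "is_ideal (I::'a set) \<Longrightarrow> finite (MinP I)"
proof (induction I rule: wf_induct[OF wf_ideal_rel[OF noeth]])
  case (1 I)
  show ?case
  proof (cases "is_prime_ideal I")
    case True
    then have "MinP I \<subseteq> {I}" unfolding MinP_def V_def Spec_def by auto
    then show ?thesis using finite_subset by blast
  next
    case np: False
    show ?thesis
    proof (cases "I = UNIV")
      case True
      then have "MinP I = {}" unfolding MinP_def V_def Spec_def is_prime_ideal_def by auto
      then show ?thesis by simp
    next
      case False
      then obtain a b where ab: "a * b \<in> I" "a \<notin> I" "b \<notin> I" using np 1(2) unfolding is_prime_ideal_def by blast
      have ia: "is_ideal (addgen I a)" "is_ideal (addgen I b)" using ideal_addgen 1(2) by auto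
      have "(addgen I a, I) \<in> ideal_rel" "(addgen I b, I) \<in> ideal_rel"
        unfolding ideal_rel_def using ia 1(2) addgen_sub addgen_mem ab by blast+
      then have fin: "finite (MinP (addgen I a))" "finite (MinP (addgen I b))" using 1(1) ia by auto
      have "MinP I \<subseteq> MinP (addgen I a) \<union> MinP (addgen I b)"
      proof
        fix P assume P: "P \<in> MinP I"
        then have Pp: "is_prime_ideal P" "I \<subseteq> P" unfolding MinP_def V_def Spec_def by auto
        then have "a \<in> P \<or> b \<in> P" using ab unfolding is_prime_ideal_def by blast
        then show "P \<in> MinP (addgen I a) \<union> MinP (addgen I b)"
        proof
          assume "a \<in> P"
          then have "addgen I a \<subseteq> P" using addgen_le Pp unfolding is_prime_ideal_def by blast
          moreover have "\<forall>Q\<in>V (addgen I a). Q \<in> V I" using addgen_sub[OF 1(2)] unfolding V_def by blast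
          ultimately have "P \<in> MinP (addgen I a)" using P Pp unfolding MinP_def V_def Spec_def by auto
          then show ?thesis by blast
        next
          assume "b \<in> P"
          then have "addgen I b \<subseteq> P" using addgen_le Pp unfolding is_prime_ideal_def by blast
          moreover have "\<forall>Q\<in>V (addgen I b). Q \<in> V I" using addgen_sub[OF 1(2)] unfolding V_def by blast
          ultimately have "P \<in> MinP (addgen I b)" using P Pp unfolding MinP_def V_def Spec_def by auto
          then show ?thesis by blast
        qed
      qed
      then show ?thesis using fin finite_subset by blast
    qed
  qed
qed

lemma nzd_pow: assumes "\<forall>x::'a::comm_ring_1. s * x = 0 \<longrightarrow> x = 0" shows "t * s ^ n = 0 \<Longrightarrow> t = 0"
proof (induction n)
  case 0 then show ?case by simp
next
  case (Suc n)
  have "s * (t * s ^ n) = 0" using Suc.prems by (simp add: ac_simps)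
  then have "t * s ^ n = 0" using assms by blast
  then show ?case using Suc.IH by blast
qed

lemma prime_below:
  assumes noeth: "noetherian_ring TYPE('a::comm_ring_1)"
    and nzd: "\<forall>x::'a. s * x = 0 \<longrightarrow> x = 0"
    and p: "p \<in> Spec" and sp: "s \<in> p"
  shows "\<exists>q\<in>Spec. q \<subset> p"
proof -
  define S where "S = {t * s ^ n | t n. t \<notin> p}"
  have pp: "is_prime_ideal p" using p unfolding Spec_def by auto
  then have pi: "is_ideal p" unfolding is_prime_ideal_def by auto
  have p0: "0 \<in> p" using pi unfolding is_ideal_def by auto
  have p1: "1 \<notin> p" using prime_not_univ_one pp by auto
  have 0: "0 \<notin> S" unfolding S_def using nzd_pow[OF nzd] p0 by force
  define F where "F = {J. is_ideal J \<and> J \<inter> S = {}}"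
  have "is_ideal {0::'a}" unfolding is_ideal_def by auto
  then have "{0} \<in> F" unfolding F_def using 0 by auto
  then obtain J where J: "J \<in> F" and Jmax: "\<And>y. (y, J) \<in> ideal_rel \<Longrightarrow> y \<notin> F"
    using wfE_min[OF wf_ideal_rel[OF noeth]] by metis
  have Ji: "is_ideal J" and JS: "J \<inter> S = {}" using J unfolding F_def by auto
  have inS: "t * s ^ n \<in> S" if "t \<notin> p" for t n using that unfolding S_def by blast
  have "1 \<in> S" using inS[OF p1, of 0] by simp
  then have JU: "J \<noteq> UNIV" using JS by auto
  have meet: "\<exists>x r t n. x \<in> J \<and> t \<notin> p \<and> x + r * a = t * s ^ n" if "a \<notin> J" for a
  proof -
    have ia: "is_ideal (addgen J a)" using ideal_addgen Ji by auto
    have "(addgen J a, J) \<in> ideal_rel" unfolding ideal_rel_def using ia Ji addgen_sub addgen_mem that by blast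
    then have "addgen J a \<notin> F" using Jmax by auto
    then have "addgen J a \<inter> S \<noteq> {}" using ia unfolding F_def by auto
    then show ?thesis unfolding addgen_def S_def by blast
  qed
  have Jpr: "\<forall>a b. a * b \<in> J \<longrightarrow> a \<in> J \<or> b \<in> J"
  proof (intro allI impI)
    fix a b assume ab: "a * b \<in> J"
    show "a \<in> J \<or> b \<in> J"
    proof (rule ccontr)
      assume nab: "\<not> (a \<in> J \<or> b \<in> J)"
      have na: "a \<notin> J" and nb: "b \<notin> J" using nab by auto
      obtain x1 r1 t1 n1 where
        h1: "x1 \<in> J" "t1 \<notin> p" "x1 + r1 * a = t1 * s ^ n1"
        using meet[OF na] by blast
      obtain x2 r2 t2 n2 where
        h2: "x2 \<in> J" "t2 \<notin> p" "x2 + r2 * b = t2 * s ^ n2"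
        using meet[OF nb] by blast
      note h = h1 h2
      have pm: "\<And>u v. u * v \<in> p \<Longrightarrow> u \<in> p \<or> v \<in> p" using pp unfolding is_prime_ideal_def by blast
      have tt: "t1 * t2 \<notin> p" using pm h1(2) h2(2) by blast
      have "(x1 + r1 * a) * (x2 + r2 * b) = (x2 + r2 * b) * x1 + (r1 * a) * x2 + (r1 * r2) * (a * b)"
        by (simp add: distrib_left distrib_right ac_simps)
      moreover have "(x2 + r2 * b) * x1 + (r1 * a) * x2 + (r1 * r2) * (a * b) \<in> J"
      proof -
        have m: "\<And>r x. x \<in> J \<Longrightarrow> r * x \<in> J" and ad: "\<And>x y. x \<in> J \<Longrightarrow> y \<in> J \<Longrightarrow> x + y \<in> J"
          using Ji unfolding is_ideal_def by auto
        show ?thesis by (intro ad m h(1) h(4) ab)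
      qed
      moreover have "(x1 + r1 * a) * (x2 + r2 * b) = (t1 * t2) * s ^ (n1 + n2)"
        unfolding h1(3) h2(3) power_add by (simp only: ac_simps)
      ultimately have "(t1 * t2) * s ^ (n1 + n2) \<in> J" by simp
      then show False using inS[OF tt] JS by blast
    qed
  qed
  have Jp: "is_prime_ideal J" unfolding is_prime_ideal_def by (intro conjI Ji JU Jpr)
  have sS: "s \<in> S" using inS[OF p1, of 1] by simp
  have "J \<subseteq> p"
  proof
    fix x assume xJ: "x \<in> J"
    show "x \<in> p"
    proof (rule ccontr)
      assume "x \<notin> p"
      then have "x \<in> S" using inS[of x 0] by simp
      then show False using JS xJ by blast
    qed
  qed
  moreover have "s \<notin> J" using JS sS by blast
  ultimately have "J \<subset> p" using sp by auto
  then show ?thesis using Jp unfolding Spec_def by auto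
qed

lemma has_chain_mono: "has_chain S n \<Longrightarrow> S \<subseteq> T \<Longrightarrow> has_chain T n"
  unfolding has_chain_def by blast

lemma chain_bound:
  assumes "krull_dim TYPE('a::comm_ring_1) = enat d" "has_chain (Spec::'a set set) n"
  shows "n \<le> d"
proof -
  have "enat n \<le> chain_dim (Spec::'a set set)" unfolding chain_dim_def
    using assms(2) by (intro Sup_upper) auto
  then show ?thesis using assms(1) unfolding krull_dim_def by simp
qed

lemma chain_max:
  assumes "S \<noteq> {}" "\<forall>n. has_chain S n \<longrightarrow> n \<le> d"
  shows "chain_dim S = enat (Max {n. has_chain S n}) \<and> has_chain S (Max {n. has_chain S n})
     \<and> (\<forall>n. has_chain S n \<longrightarrow> n \<le> Max {n. has_chain S n})"
proof -
  define N where "N = {n. has_chain S n}"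
  have fin: "finite N" using assms(2) unfolding N_def
    by (meson finite_nat_set_iff_bounded_le mem_Collect_eq)
  obtain x where "x \<in> S" using assms(1) by auto
  then have "has_chain S 0" unfolding has_chain_def by (intro exI[of _ "\<lambda>_. x"]) auto
  then have ne: "N \<noteq> {}" unfolding N_def by auto
  have eq: "{enat n | n. has_chain S n} = enat ` N" unfolding N_def by auto
  have "Sup (enat ` N) = Max (enat ` N)" using fin ne by (intro cSup_eq_Max) auto
  also have "\<dots> = enat (Max N)" using fin ne
    by (intro mono_Max_commute[symmetric]) (auto simp: mono_def)
  finally have "chain_dim S = enat (Max N)" unfolding chain_dim_def eq .
  moreover have "Max N \<in> N" using fin ne by simp
  ultimately show ?thesis using fin unfolding N_def by auto
qed

lemma chain_prepend:
  assumes "\<forall>i\<le>n. c i \<in> T" "\<forall>i<n. c i \<subset> c (Suc i)" "q \<in> T" "q \<subset> c 0"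
  shows "has_chain T (Suc n)"
  unfolding has_chain_def
proof (intro exI[of _ "\<lambda>i. if i = 0 then q else c (i - 1)"] conjI allI impI)
  fix i assume "i \<le> Suc n" then show "(if i = 0 then q else c (i - 1)) \<in> T" using assms by auto
next
  fix i assume i: "i < Suc n"
  show "(if i = 0 then q else c (i - 1)) \<subset> (if Suc i = 0 then q else c (Suc i - 1))"
  proof (cases i)
    case 0 then show ?thesis using assms by simp
  next
    case (Suc j) then show ?thesis using assms i by simp
  qed
qed


lemma has_chain_Spec:
  assumes "S \<subseteq> (Spec::'a::comm_ring_1 set set)" "has_chain S n" "krull_dim TYPE('a) = enat d"
  shows "n \<le> d"
  using chain_bound[OF assms(3) has_chain_mono[OF assms(2) assms(1)]] .

theorem mainTheorem3:
  fixes s :: "'a::comm_ring_1" and d :: nat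
  assumes noeth: "noetherian_ring TYPE('a)"
    and dim: "krull_dim TYPE('a) = enat d"
    and nzd: "\<forall>x::'a. s * x = 0 \<longrightarrow> x = 0"
    and loc: "dim_localization s + 1 \<le> enat d"
  shows "\<exists>\<delta> :: 'a set \<Rightarrow> nat. gen_dim_fun Spec \<delta>
           \<and> (\<forall>p\<in>Spec. \<delta> p + 1 \<le> d)
           \<and> (\<forall>p\<in>Spec. s \<in> p \<longrightarrow> enat (\<delta> p) = dim_quotient p)"
proof -
  define T where "T p = {P \<in> (Spec::'a set set). p \<subseteq> P \<and> (s \<in> p \<or> s \<notin> P)}" for p
  define \<delta> where "\<delta> p = Max {n. has_chain (T p) n}" for p
  have TS: "T p \<subseteq> Spec" for p unfolding T_def by auto
  have props: "chain_dim (T p) = enat (\<delta> p) \<and> has_chain (T p) (\<delta> p)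
     \<and> (\<forall>n. has_chain (T p) n \<longrightarrow> n \<le> \<delta> p)" if p: "p \<in> Spec" for p
  proof -
    have "p \<in> T p" using p unfolding T_def by auto
    then have "T p \<noteq> {}" by auto
    moreover have "\<forall>n. has_chain (T p) n \<longrightarrow> n \<le> d" using has_chain_Spec[OF TS _ dim] by blast
    ultimately show ?thesis unfolding \<delta>_def by (rule chain_max)
  qed
  have strict: "\<delta> p < \<delta> q" if q: "q \<in> Spec" and p: "p \<in> Spec" and qp: "q \<subset> p" and st: "s \<in> q \<or> s \<notin> p" for p q
  proof -
    obtain c where c: "\<forall>i\<le>\<delta> p. c i \<in> T p" "\<forall>i<\<delta> p. c i \<subset> c (Suc i)"
      using props[OF p] unfolding has_chain_def by blast
    have A: "\<forall>i\<le>\<delta> p. c i \<in> T q"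
    proof (intro allI impI)
      fix i assume "i \<le> \<delta> p"
      then have "c i \<in> T p" using c by auto
      then show "c i \<in> T q" using qp st unfolding T_def by auto
    qed
    have B: "q \<in> T q" using q unfolding T_def by auto
    have "c 0 \<in> T p" using c(1) by simp
    then have C: "q \<subset> c 0" using qp unfolding T_def by auto
    have "has_chain (T q) (Suc (\<delta> p))" by (rule chain_prepend[OF A c(2) B C])
    then have "Suc (\<delta> p) \<le> \<delta> q" using props[OF q] by blast
    then show ?thesis by simp
  qed
  have bound: "\<delta> p + 1 \<le> d" if p: "p \<in> Spec" for p
  proof (cases "s \<in> p")
    case True
    obtain q where q: "q \<in> Spec" "q \<subset> p" using prime_below[OF noeth nzd p True] by blast
    obtain c where c: "\<forall>i\<le>\<delta> p. c i \<in> T p" "\<forall>i<\<delta> p. c i \<subset> c (Suc i)"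
      using props[OF p] unfolding has_chain_def by blast
    have A: "\<forall>i\<le>\<delta> p. c i \<in> (Spec::'a set set)" using c(1) TS by blast
    have "c 0 \<in> T p" using c(1) by simp
    then have C: "q \<subset> c 0" using q unfolding T_def by auto
    have "has_chain (Spec::'a set set) (Suc (\<delta> p))" by (rule chain_prepend[OF A c(2) q(1) C])
    then have "Suc (\<delta> p) \<le> d" by (rule chain_bound[OF dim])
    then show ?thesis by simp
  next
    case False
    have "T p \<subseteq> {P \<in> Spec. s \<notin> P}" using False unfolding T_def by auto
    then have "has_chain {P \<in> Spec. s \<notin> P} (\<delta> p)" using props[OF p] has_chain_mono by blast
    then have "enat (\<delta> p) \<le> dim_localization s" unfolding dim_localization_def chain_dim_def
      by (intro Sup_upper) auto
    then have "enat (\<delta> p) + 1 \<le> enat d" using loc by (meson add_right_mono order_trans)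
    then show ?thesis by (simp add: one_enat_def)
  qed
  have quot: "enat (\<delta> p) = dim_quotient p" if p: "p \<in> Spec" and sp: "s \<in> p" for p
  proof -
    have "T p = {P \<in> Spec. p \<subseteq> P}" using sp unfolding T_def by auto
    then show ?thesis using props[OF p] unfolding dim_quotient_def by simp
  qed
  have gd: "gen_dim_fun Spec \<delta>"
    unfolding gen_dim_fun_def
  proof (intro conjI allI impI)
    show "Spec \<subseteq> Spec" by simp
  next
    fix I :: "'a set" assume I: "is_ideal I"
    have sub: "dll_minimal \<delta> (V I \<inter> Spec) \<subseteq> MinP I \<union> MinP (addgen I s)"
    proof
      fix p assume pm: "p \<in> dll_minimal \<delta> (V I \<inter> Spec)"
      then have pV: "p \<in> V I" and pS: "p \<in> Spec"
        and nodll: "\<And>q. q \<in> V I \<Longrightarrow> q \<in> Spec \<Longrightarrow> \<not> dll \<delta> q p"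
        unfolding dll_minimal_def V_def by auto
      show "p \<in> MinP I \<union> MinP (addgen I s)"
      proof (cases "p \<in> MinP I")
        case True then show ?thesis by blast
      next
        case False
        then obtain q where q: "q \<in> V I" "q \<subseteq> p" "q \<noteq> p" using pV unfolding MinP_def by auto
        have qS: "q \<in> Spec" using q(1) unfolding V_def by auto
        have sp: "s \<in> p"
        proof (rule ccontr)
          assume "s \<notin> p"
          then have "\<delta> p < \<delta> q" using strict[OF qS pS] q by auto
          then show False using nodll[OF q(1) qS] q(2) unfolding dll_def by auto
        qed
        have pi: "is_ideal p" using pS unfolding Spec_def is_prime_ideal_def by auto
        have IP: "I \<subseteq> p" using pV unfolding V_def by auto
        have pV2: "p \<in> V (addgen I s)" using addgen_le[OF pi IP sp] pS unfolding V_def by auto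
        have "p \<in> MinP (addgen I s)"
        proof (rule ccontr)
          assume "p \<notin> MinP (addgen I s)"
          then obtain q' where q': "q' \<in> V (addgen I s)" "q' \<subseteq> p" "q' \<noteq> p"
            using pV2 unfolding MinP_def by auto
          have q'S: "q' \<in> Spec" using q'(1) unfolding V_def by auto
          have "s \<in> q'" using q'(1) addgen_mem[OF I, of s] unfolding V_def by auto
          then have "\<delta> p < \<delta> q'" using strict[OF q'S pS] q' by auto
          moreover have "q' \<in> V I" using q'(1) addgen_sub[OF I, of s] unfolding V_def by auto
          ultimately show False using nodll[OF _ q'S] q'(2) unfolding dll_def by auto
        qed
        then show ?thesis by blast
      qed
    qed
    have "finite (MinP I)" "finite (MinP (addgen I s))"
      using finite_MinP[OF noeth] I ideal_addgen by auto
    then show "finite (dll_minimal \<delta> (V I \<inter> Spec))" using sub finite_subset by blast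
  qed
  show ?thesis using gd bound quot by blast
qed

end
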